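(* Let $\varrho=\mathrm{Tr}_B|\psi\rangle\langle\psi|$ have eigenvalues $p_1,\dots,p_d$ and eigenbasis $\{|i\rangle\}$, and let $V_\Lambda=\sum_i\lambda_i|i\rangle\langle i|$. Then $$\sqrt{F^\Lambda_\psi}=\max_{U\ \text{unitary}}\Big|\mathrm{Tr}[UV_\Lambda U^\dagger\varrho]\Big|=\max_{U}\Big|\sum_{i}\lambda_i\sum_j p_j|u_{ij}|^2\Big|,\quad u_{ij}=\langle i|U|j\rangle,$$ and the maximum over $U$ is attained at a permutation matrix. Consequently $\sqrt{F^\Lambda_\psi}=\max_{\sigma\in S_d}\big|\sum_{i=1}^d\lambda_i\,p_{\sigma(i)}\big|$, and there is a maximizing $W\in\mathcal{W}_\Lambda$ that is diagonal in the eigenbasis of $\varrho$, so that $[W,\varrho]=0$.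
   Context: Let $d=d_A\le d_B$ and let $|\psi\rangle\in\mathbb{C}^{d_A}\otimes\mathbb{C}^{d_B}$ be a unit vector. A spectrum is a multiset $\Lambda=\{\lambda_1,\dots,\lambda_d\}$ of unimodular complex numbers $\lambda_j=e^{i\theta_j}$. Let $\mathcal{W}_\Lambda$ be the set of unitary $d\times d$ matrices acting on $\mathbb{C}^{d_A}$ whose eigenvalues, counted with multiplicity, are exactly $\Lambda$. Define $F^\Lambda_\psi=\max_{W\in\mathcal{W}_\Lambda}|\langle\psi|(W\otimes \mathbb{1}_B)|\psi\rangle|^2$. $S_d$ denotes the symmetric group on $\{1,\dots,d\}$. *)

theory Defs
  imports "Jordan_Normal_Form.Matrix" "Jordan_Normal_Form.Char_Poly"
          "HOL-Combinatorics.Permutations"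
begin

definition adj :: "complex mat \<Rightarrow> complex mat" where
  "adj A = mat (dim_col A) (dim_row A) (\<lambda>(i,j). cnj (A $$ (j,i)))"

definition unitary_mat :: "nat \<Rightarrow> complex mat \<Rightarrow> bool" where
  "unitary_mat d U \<longleftrightarrow> U \<in> carrier_mat d d \<and> adj U * U = 1\<^sub>m d \<and> U * adj U = 1\<^sub>m d"

definition diagm :: "nat \<Rightarrow> (nat \<Rightarrow> complex) \<Rightarrow> complex mat" where
  "diagm d f = mat d d (\<lambda>(i,j). if i = j then f i else 0)"

definition perm_mat :: "nat \<Rightarrow> (nat \<Rightarrow> nat) \<Rightarrow> complex mat" where
  "perm_mat d \<sigma> = mat d d (\<lambda>(i,j). if i = \<sigma> j then 1 else 0)"

text \<open>The set W_Lambda: unitary d x d matrices whose eigenvalues counted with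
  multiplicity (roots of the characteristic polynomial) are lam 0, ..., lam (d-1).\<close>
definition W_set :: "nat \<Rightarrow> (nat \<Rightarrow> complex) \<Rightarrow> complex mat set" where
  "W_set d lam = {W. unitary_mat d W \<and> char_poly W = (\<Prod>i<d. [:- lam i, 1:])}"

text \<open>A vector psi in C^dA (x) C^dB is stored by its coefficients psi a b
  (a < dA, b < dB).  Expectation value of W (x) 1_B in the state psi.\<close>
definition expval :: "nat \<Rightarrow> nat \<Rightarrow> (nat \<Rightarrow> nat \<Rightarrow> complex) \<Rightarrow> complex mat \<Rightarrow> complex" where
  "expval dA dB psi W =
     (\<Sum>a<dA. \<Sum>a'<dA. \<Sum>b<dB. cnj (psi a b) * W $$ (a,a') * psi a' b)"

definition fid :: "nat \<Rightarrow> nat \<Rightarrow> (nat \<Rightarrow> nat \<Rightarrow> complex) \<Rightarrow> complex mat \<Rightarrow> real" where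
  "fid dA dB psi W = (cmod (expval dA dB psi W))\<^sup>2"

text \<open>F^Lambda_psi, the maximum of fid over W_Lambda (as a supremum; attainment is
  part of the theorem).\<close>
definition F_Lam :: "nat \<Rightarrow> nat \<Rightarrow> (nat \<Rightarrow> complex) \<Rightarrow> (nat \<Rightarrow> nat \<Rightarrow> complex) \<Rightarrow> real" where
  "F_Lam dA dB lam psi = (SUP W \<in> W_set dA lam. fid dA dB psi W)"

definition red_state :: "nat \<Rightarrow> nat \<Rightarrow> (nat \<Rightarrow> nat \<Rightarrow> complex) \<Rightarrow> complex mat" where
  "red_state dA dB psi = mat dA dA (\<lambda>(i,j). \<Sum>b<dB. psi i b * cnj (psi j b))"

definition tr :: "complex mat \<Rightarrow> complex" where
  "tr A = (\<Sum>i<dim_row A. A $$ (i,i))"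

definition is_max :: "real set \<Rightarrow> real \<Rightarrow> bool" where
  "is_max S x \<longleftrightarrow> x \<in> S \<and> (\<forall>y\<in>S. y \<le> x)"

end

theory Submission
  imports Defs
begin

lemma mult_ent:
  assumes "A \<in> carrier_mat n k" "B \<in> carrier_mat k m" "i < n" "j < m"
  shows "(A * B) $$ (i,j) = (\<Sum>l<k. A $$ (i,l) * B $$ (l,j))"
  using assms by (auto simp: scalar_prod_def atLeast0LessThan intro!: sum.cong)

lemma adj_carrier[simp]: "adj A \<in> carrier_mat (dim_col A) (dim_row A)"
  by (simp add: adj_def)
lemma adj_dims[simp]: "dim_row (adj A) = dim_col A" "dim_col (adj A) = dim_row A"
  by (simp_all add: adj_def)
lemma adj_ent[simp]: "i < dim_col A \<Longrightarrow> j < dim_row A \<Longrightarrow> adj A $$ (i,j) = cnj (A $$ (j,i))"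
  by (simp add: adj_def)
lemma adj_carrier2: "A \<in> carrier_mat n m \<Longrightarrow> adj A \<in> carrier_mat m n"
  unfolding carrier_mat_def by simp

lemma adj_adj: "adj (adj A) = A"
  by (rule eq_matI) auto

lemma adj_mult:
  assumes A: "A \<in> carrier_mat n k" and B: "B \<in> carrier_mat k m"
  shows "adj (A * B) = adj B * adj A"
proof (rule eq_matI)
  fix i j assume ij: "i < dim_row (adj B * adj A)" "j < dim_col (adj B * adj A)"
  then have i: "i < m" and j: "j < n" using assms by auto
  have "adj (A * B) $$ (i, j) = cnj ((A * B) $$ (j,i))"
    using A B i j by (simp add: adj_def)
  also have "\<dots> = (\<Sum>l<k. cnj (A $$ (j,l)) * cnj (B $$ (l,i)))"
    by (simp add: mult_ent[OF A B j i] cnj_sum del: index_mult_mat)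
  also have "\<dots> = (adj B * adj A) $$ (i, j)"
    using A B i j by (simp add: mult_ent[OF adj_carrier2[OF B] adj_carrier2[OF A] i j] mult.commute
       del: index_mult_mat)
  finally show "adj (A * B) $$ (i, j) = (adj B * adj A) $$ (i, j)" .
qed (use assms in auto)

lemma mult_cnj_cmod: "z * cnj z = complex_of_real ((cmod z)\<^sup>2)"
  by (simp add: complex_mult_cnj cmod_power2)
lemma cnj_mult_cmod: "cnj z * z = complex_of_real ((cmod z)\<^sup>2)"
  by (simp add: complex_mult_cnj cmod_power2 mult.commute)

lemma adj_one[simp]: "adj (1\<^sub>m n) = 1\<^sub>m n"
  by (rule eq_matI) auto

lemma unitary_carrier: "unitary_mat n U \<Longrightarrow> U \<in> carrier_mat n n"
  by (simp add: unitary_mat_def)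

lemma unitary_mult:
  assumes "unitary_mat n A" "unitary_mat n B"
  shows "unitary_mat n (A * B)"
proof -
  have A: "A \<in> carrier_mat n n" and B: "B \<in> carrier_mat n n"
    and a1: "adj A * A = 1\<^sub>m n" and a2: "A * adj A = 1\<^sub>m n"
    and b1: "adj B * B = 1\<^sub>m n" and b2: "B * adj B = 1\<^sub>m n"
    using assms by (auto simp: unitary_mat_def)
  have aA: "adj A \<in> carrier_mat n n" and aB: "adj B \<in> carrier_mat n n"
    using A B adj_carrier2 by blast+
  have "adj (A * B) * (A * B) = adj B * (adj A * A) * B"
    using A B aA aB by (simp add: adj_mult[OF A B] assoc_mult_mat[of _ n n _ n _ n])
  also have "\<dots> = 1\<^sub>m n" using a1 b1 B aB by simp
  finally have 1: "adj (A * B) * (A * B) = 1\<^sub>m n" .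
  have "(A * B) * adj (A * B) = A * (B * adj B) * adj A"
    using A B aA aB by (simp add: adj_mult[OF A B] assoc_mult_mat[of _ n n _ n _ n])
  also have "\<dots> = 1\<^sub>m n" using a2 b2 A aA by simp
  finally have 2: "(A * B) * adj (A * B) = 1\<^sub>m n" .
  show ?thesis unfolding unitary_mat_def using 1 2 mult_carrier_mat[OF A B] by blast
qed

lemma unitary_adj: "unitary_mat n A \<Longrightarrow> unitary_mat n (adj A)"
  unfolding unitary_mat_def by (simp add: adj_adj adj_carrier2)

lemma diagm_carrier[simp]: "diagm n f \<in> carrier_mat n n"
  by (simp add: diagm_def)
lemma diagm_ent[simp]: "i < n \<Longrightarrow> j < n \<Longrightarrow> diagm n f $$ (i,j) = (if i = j then f i else 0)"
  by (simp add: diagm_def)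

lemma sim_ent:
  assumes R: "R \<in> carrier_mat n n" and ij: "i < n" "j < n"
  shows "(R * diagm n f * adj R) $$ (i,j) = (\<Sum>k<n. R $$ (i,k) * f k * cnj (R $$ (j,k)))"
proof -
  have RD: "R * diagm n f \<in> carrier_mat n n" using R by simp
  have e: "\<And>k. k < n \<Longrightarrow> (R * diagm n f) $$ (i,k) = R $$ (i,k) * f k"
    using R ij by (simp add: mult_ent[OF R diagm_carrier] if_distrib del: index_mult_mat cong: if_cong)
  show ?thesis
    using R ij e by (simp add: mult_ent[OF RD adj_carrier2[OF R]] del: index_mult_mat)
qed

lemma unitary_rows:
  assumes "unitary_mat n X" "i < n"
  shows "(\<Sum>j<n. (cmod (X $$ (i,j)))\<^sup>2) = 1"
proof -
  have X: "X \<in> carrier_mat n n" and e: "X * adj X = 1\<^sub>m n" using assms by (auto simp: unitary_mat_def)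
  have "complex_of_real (\<Sum>j<n. (cmod (X $$ (i,j)))\<^sup>2) = (\<Sum>j<n. X $$ (i,j) * cnj (X $$ (i,j)))"
    by (simp add: mult_cnj_cmod)
  also have "\<dots> = (X * adj X) $$ (i,i)"
    using X assms by (simp add: mult_ent[OF X adj_carrier2[OF X]] del: index_mult_mat)
  also have "(X * adj X) $$ (i,i) = 1" using e assms by simp
  finally show ?thesis by (simp only: of_real_eq_1_iff)
qed

lemma unitary_cols:
  assumes "unitary_mat n X" "j < n"
  shows "(\<Sum>i<n. (cmod (X $$ (i,j)))\<^sup>2) = 1"
proof -
  have X: "X \<in> carrier_mat n n" and e: "adj X * X = 1\<^sub>m n" using assms by (auto simp: unitary_mat_def)
  have "complex_of_real (\<Sum>i<n. (cmod (X $$ (i,j)))\<^sup>2) = (\<Sum>i<n. cnj (X $$ (i,j)) * X $$ (i,j))"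
    by (simp add: cnj_mult_cmod)
  also have "\<dots> = (adj X * X) $$ (j,j)"
    using X assms by (simp add: mult_ent[OF adj_carrier2[OF X] X] del: index_mult_mat)
  also have "(adj X * X) $$ (j,j) = 1" using e assms by simp
  finally show ?thesis by (simp only: of_real_eq_1_iff)
qed

lemma core_aux:
  fixes x :: "'a \<Rightarrow> real" and y :: "'b \<Rightarrow> real" and B :: "'a \<Rightarrow> 'b \<Rightarrow> real"
  assumes "card I = n" "finite I" "finite J" "card J = card I"
    "\<forall>i\<in>I. \<forall>j\<in>J. B i j \<ge> 0" "\<forall>i\<in>I. (\<Sum>j\<in>J. B i j) = 1" "\<forall>j\<in>J. (\<Sum>i\<in>I. B i j) = 1"
  shows "\<exists>f. bij_betw f I J \<and> (\<Sum>i\<in>I. \<Sum>j\<in>J. x i * B i j * y j) \<le> (\<Sum>i\<in>I. x i * y (f i))"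
  using assms
proof (induction n arbitrary: I J B)
  case 0
  then have "I = {}" "J = {}" by auto
  then show ?case by (auto simp: bij_betw_def)
next
  case (Suc n)
  note fin = Suc.prems(2,3)
  have In: "I \<noteq> {}" using Suc.prems(1) by auto
  have Jn: "J \<noteq> {}" using Suc.prems(1,4) by auto
  have nn: "\<And>i j. i \<in> I \<Longrightarrow> j \<in> J \<Longrightarrow> B i j \<ge> 0" using Suc.prems(5) by auto
  have rs: "\<And>i. i \<in> I \<Longrightarrow> (\<Sum>j\<in>J. B i j) = 1" using Suc.prems(6) by auto
  have cs: "\<And>j. j \<in> J \<Longrightarrow> (\<Sum>i\<in>I. B i j) = 1" using Suc.prems(7) by auto
  obtain i0 where i0: "i0 \<in> I" "\<forall>i\<in>I. x i \<le> x i0"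
  proof -
    have "Max (x ` I) \<in> x ` I" using fin In by (intro Max_in) auto
    then obtain i0 where "i0 \<in> I" "x i0 = Max (x ` I)" by auto
    moreover have "\<forall>i\<in>I. x i \<le> Max (x ` I)" using fin by auto
    ultimately show ?thesis using that by auto
  qed
  obtain j0 where j0: "j0 \<in> J" "\<forall>j\<in>J. y j \<le> y j0"
  proof -
    have "Max (y ` J) \<in> y ` J" using fin Jn by (intro Max_in) auto
    then obtain j0 where "j0 \<in> J" "y j0 = Max (y ` J)" by auto
    moreover have "\<forall>j\<in>J. y j \<le> Max (y ` J)" using fin by auto
    ultimately show ?thesis using that by auto
  qed
  define I' where "I' = I - {i0}"
  define J' where "J' = J - {j0}"
  have finI': "finite I'" and finJ': "finite J'" using fin by (auto simp: I'_def J'_def)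
  define s where "s = 1 - B i0 j0"
  have sr: "(\<Sum>i\<in>I'. B i j0) = s"
    using cs[OF j0(1)] sum.remove[OF fin(1) i0(1), of "\<lambda>i. B i j0"] by (simp add: I'_def s_def)
  have sc: "(\<Sum>j\<in>J'. B i0 j) = s"
    using rs[OF i0(1)] sum.remove[OF fin(2) j0(1), of "\<lambda>j. B i0 j"] by (simp add: J'_def s_def)
  have rowI': "(\<Sum>j\<in>J'. B i j) = 1 - B i j0" if "i \<in> I'" for i
    using rs[of i] that sum.remove[OF fin(2) j0(1), of "\<lambda>j. B i j"] by (simp add: I'_def J'_def)
  have colJ': "(\<Sum>i\<in>I'. B i j) = 1 - B i0 j" if "j \<in> J'" for j
    using cs[of j] that sum.remove[OF fin(1) i0(1), of "\<lambda>i. B i j"] by (simp add: I'_def J'_def)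
  have s0: "s \<ge> 0" unfolding sr[symmetric] by (rule sum_nonneg) (use nn j0 in \<open>auto simp: I'_def\<close>)
  have zr: "B i j0 = 0" if "s = 0" "i \<in> I'" for i
    using sum_nonneg_0[OF finI', of "\<lambda>i. B i j0"] sr that nn j0 by (auto simp: I'_def)
  have zc: "B i0 j = 0" if "s = 0" "j \<in> J'" for j
    using sum_nonneg_0[OF finJ', of "\<lambda>j. B i0 j"] sc that nn i0 by (auto simp: J'_def)
  define B' where "B' i j = B i j + (if s = 0 then 0 else B i j0 * B i0 j / s)" for i j
  have nn': "\<forall>i\<in>I'. \<forall>j\<in>J'. B' i j \<ge> 0"
    using nn s0 i0 j0 by (auto simp: B'_def I'_def J'_def)
  have rs': "\<forall>i\<in>I'. (\<Sum>j\<in>J'. B' i j) = 1"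
  proof
    fix i assume i: "i \<in> I'"
    have "(\<Sum>j\<in>J'. B' i j) = (\<Sum>j\<in>J'. B i j) + (if s = 0 then 0 else B i j0 * (\<Sum>j\<in>J'. B i0 j) / s)"
      by (simp add: B'_def sum.distrib sum_divide_distrib[symmetric] sum_distrib_left)
    also have "\<dots> = 1" using rowI'[OF i] sc zr[OF _ i] by auto
    finally show "(\<Sum>j\<in>J'. B' i j) = 1" .
  qed
  have cs': "\<forall>j\<in>J'. (\<Sum>i\<in>I'. B' i j) = 1"
  proof
    fix j assume j: "j \<in> J'"
    have "(\<Sum>i\<in>I'. B' i j) = (\<Sum>i\<in>I'. B i j) + (if s = 0 then 0 else (\<Sum>i\<in>I'. B i j0) * B i0 j / s)"
      by (simp add: B'_def sum.distrib sum_divide_distrib[symmetric] sum_distrib_right)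
    also have "\<dots> = 1" using colJ'[OF j] sr zc[OF _ j] by auto
    finally show "(\<Sum>i\<in>I'. B' i j) = 1" .
  qed
  have cI': "card I' = n" using Suc.prems(1) i0 fin by (simp add: I'_def)
  have cJ': "card J' = card I'" using Suc.prems(1,4) j0 fin cI' by (simp add: J'_def)
  obtain f' where f': "bij_betw f' I' J'"
    and ih: "(\<Sum>i\<in>I'. \<Sum>j\<in>J'. x i * B' i j * y j) \<le> (\<Sum>i\<in>I'. x i * y (f' i))"
    using Suc.IH[OF cI' finI' finJ' cJ' nn' rs' cs'] by blast
  define f where "f = f'(i0 := j0)"
  have "bij_betw f I' J'" using f' unfolding f_def
    by (rule bij_betw_cong[THEN iffD1, rotated]) (auto simp: I'_def)
  then have "bij_betw f (I' \<union> {i0}) (J' \<union> {f i0})"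
    by (intro notIn_Un_bij_betw) (auto simp: I'_def J'_def f_def)
  moreover have "I' \<union> {i0} = I" "J' \<union> {f i0} = J" using i0 j0 by (auto simp: I'_def J'_def f_def)
  ultimately have bf: "bij_betw f I J" by simp
  define X where "X = (\<Sum>i\<in>I'. x i * B i j0)"
  define Y where "Y = (\<Sum>j\<in>J'. B i0 j * y j)"
  define S where "S = (\<Sum>i\<in>I'. \<Sum>j\<in>J'. x i * B i j * y j)"
  have split: "(\<Sum>j\<in>J. g j) = g j0 + (\<Sum>j\<in>J'. g j)" for g :: "'b \<Rightarrow> real"
    using sum.remove[OF fin(2) j0(1)] by (simp add: J'_def)
  have splitI: "(\<Sum>i\<in>I. g i) = g i0 + (\<Sum>i\<in>I'. g i)" for g :: "'a \<Rightarrow> real"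
    using sum.remove[OF fin(1) i0(1)] by (simp add: I'_def)
  have L: "(\<Sum>i\<in>I. \<Sum>j\<in>J. x i * B i j * y j) = x i0 * B i0 j0 * y j0 + x i0 * Y + y j0 * X + S"
    by (simp add: splitI split sum.distrib X_def Y_def S_def sum_distrib_left sum_distrib_right
        algebra_simps)
  have S': "(\<Sum>i\<in>I'. \<Sum>j\<in>J'. x i * B' i j * y j) = S + (if s = 0 then 0 else X * Y / s)"
    by (simp add: B'_def S_def X_def Y_def algebra_simps sum.distrib sum_distrib_left
        sum_distrib_right sum_divide_distrib[symmetric])
       (subst sum.swap, simp)
  have R: "(\<Sum>i\<in>I. x i * y (f i)) = x i0 * y j0 + (\<Sum>i\<in>I'. x i * y (f' i))"
    by (simp add: splitI f_def I'_def)
  have key: "x i0 * B i0 j0 * y j0 + x i0 * Y + y j0 * X \<le> x i0 * y j0 + (if s = 0 then 0 else X * Y / s)"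
  proof (cases "s = 0")
    case True
    then have "X = 0" "Y = 0" using zr zc by (auto simp: X_def Y_def)
    then show ?thesis using True by (simp add: s_def)
  next
    case False
    then have sp: "s > 0" using s0 by auto
    have a: "s * x i0 - X \<ge> 0"
    proof -
      have "s * x i0 - X = (\<Sum>i\<in>I'. B i j0 * (x i0 - x i))"
        by (simp add: sr[symmetric] X_def sum_distrib_right sum_distrib_left sum_subtractf algebra_simps)
      also have "\<dots> \<ge> 0" using nn i0 j0 by (intro sum_nonneg) (auto simp: I'_def)
      finally show ?thesis .
    qed
    have b: "s * y j0 - Y \<ge> 0"
    proof -
      have "s * y j0 - Y = (\<Sum>j\<in>J'. B i0 j * (y j0 - y j))"
        by (simp add: sc[symmetric] Y_def sum_distrib_right sum_distrib_left sum_subtractf algebra_simps)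
      also have "\<dots> \<ge> 0" using nn i0 j0 by (intro sum_nonneg) (auto simp: J'_def)
      finally show ?thesis .
    qed
    have "(s * x i0 - X) * (s * y j0 - Y) / s \<ge> 0" using a b sp by simp
    moreover have "(s * x i0 - X) * (s * y j0 - Y) / s
        = x i0 * y j0 + X * Y / s - (x i0 * B i0 j0 * y j0 + x i0 * Y + y j0 * X)"
      using sp by (simp add: field_simps s_def)
    ultimately show ?thesis using False by simp
  qed
  show ?case
    using bf key ih L S' R by (intro exI[of _ f]) auto
qed


lemma bound_E:
  fixes B :: "nat \<Rightarrow> nat \<Rightarrow> real" and p :: "nat \<Rightarrow> real" and lam :: "nat \<Rightarrow> complex"
  assumes nn: "\<forall>i<d. \<forall>j<d. B i j \<ge> 0" and rs: "\<forall>i<d. (\<Sum>j<d. B i j) = 1"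
    and cs: "\<forall>j<d. (\<Sum>i<d. B i j) = 1" and tau: "\<tau> permutes {..<d}"
  shows "\<exists>\<sigma>. \<sigma> permutes {..<d} \<and>
    cmod (\<Sum>i<d. lam (\<tau> i) * (\<Sum>j<d. complex_of_real (p j * B i j)))
      \<le> cmod (\<Sum>i<d. lam i * complex_of_real (p (\<sigma> i)))"
proof (cases "(\<Sum>i<d. lam (\<tau> i) * (\<Sum>j<d. complex_of_real (p j * B i j))) = 0")
  case True
  then show ?thesis by (intro exI[of _ id]) (auto simp: permutes_id)
next
  case False
  define z where "z = (\<Sum>i<d. lam (\<tau> i) * (\<Sum>j<d. complex_of_real (p j * B i j)))"
  have z0: "z \<noteq> 0" using False by (simp add: z_def)
  define th where "th = cnj z / complex_of_real (cmod z)"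
  have thz: "th * z = complex_of_real (cmod z)"
    using z0 by (simp add: th_def cnj_mult_cmod power2_eq_square)
  have th1: "cmod th = 1" using z0 by (simp add: th_def norm_divide)
  define x where "x i = Re (th * lam (\<tau> i))" for i
  have "cmod z = Re (th * z)" by (simp add: thz)
  also have "\<dots> = (\<Sum>i<d. \<Sum>j<d. x i * B i j * p j)"
    by (simp add: z_def x_def sum_distrib_left Re_sum algebra_simps)
  finally have cz: "cmod z = (\<Sum>i<d. \<Sum>j<d. x i * B i j * p j)" .
  obtain f where f: "bij_betw f {..<d} {..<d}"
    and le: "(\<Sum>i\<in>{..<d}. \<Sum>j\<in>{..<d}. x i * B i j * p j) \<le> (\<Sum>i\<in>{..<d}. x i * p (f i))"
    using core_aux[of "{..<d}" d "{..<d}" B x p] nn rs cs by auto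
  define g where "g i = (if i < d then f i else i)" for i
  have gp: "g permutes {..<d}"
    using f by (intro bij_imp_permutes) (auto simp: g_def bij_betw_def inj_on_def image_def)
  have gf: "\<And>i. i < d \<Longrightarrow> g i = f i" by (simp add: g_def)
  define sg where "sg = g \<circ> inv_into UNIV \<tau>"
  have sp: "sg permutes {..<d}" unfolding sg_def using gp permutes_inv[OF tau] by (rule permutes_compose[rotated])
  have "(\<Sum>i<d. x i * p (f i)) = Re (th * (\<Sum>i<d. lam (\<tau> i) * complex_of_real (p (g i))))"
    by (simp add: x_def gf sum_distrib_left Re_sum algebra_simps)
  also have "\<dots> \<le> cmod (th * (\<Sum>i<d. lam (\<tau> i) * complex_of_real (p (g i))))"
    by (rule complex_Re_le_cmod)
  also have "\<dots> = cmod (\<Sum>i<d. lam (\<tau> i) * complex_of_real (p (g i)))"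
    by (simp add: norm_mult th1)
  also have "(\<Sum>i<d. lam (\<tau> i) * complex_of_real (p (g i)))
      = (\<Sum>i<d. lam i * complex_of_real (p (sg i)))"
  proof -
    have "(\<Sum>i<d. lam (\<tau> i) * complex_of_real (p (g i)))
        = (\<Sum>i\<in>{..<d}. ((\<lambda>i. lam (\<tau> i) * complex_of_real (p (g i))) \<circ> inv_into UNIV \<tau>) i)"
      by (rule sum.permute[OF permutes_inv[OF tau]])
    also have "\<dots> = (\<Sum>i<d. lam i * complex_of_real (p (sg i)))"
      by (simp add: sg_def permutes_inverses(1)[OF tau])
    finally show ?thesis .
  qed
  finally have h1: "(\<Sum>i<d. x i * p (f i)) \<le> cmod (\<Sum>i<d. lam i * complex_of_real (p (sg i)))" .
  have h: "cmod z \<le> cmod (\<Sum>i<d. lam i * complex_of_real (p (sg i)))"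
    using cz le h1 by simp
  show ?thesis using h sp unfolding z_def by blast
qed


lemma sum_Suc_split: "(\<Sum>k<Suc m. f k) = f 0 + (\<Sum>k<m. f (Suc k))"
  by (rule sum.lessThan_Suc_shift)

lemma sum_delta_l: "i < (n::nat) \<Longrightarrow> (\<Sum>k<n. (if i = k then 1 else 0) * f k) = (f i :: 'a :: comm_ring_1)"
proof -
  assume i: "i < n"
  have "(\<Sum>k<n. (if i = k then 1 else 0) * f k) = (\<Sum>k<n. if i = k then f k else 0)"
    by (rule sum.cong) auto
  also have "\<dots> = f i" using i by (simp add: sum.delta sum.delta')
  finally show ?thesis .
qed

lemma sum_delta_r: "j < (n::nat) \<Longrightarrow> (\<Sum>k<n. f k * (if k = j then 1 else 0)) = (f j :: 'a :: comm_ring_1)"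
proof -
  assume j: "j < n"
  have "(\<Sum>k<n. f k * (if k = j then 1 else 0)) = (\<Sum>k<n. if j = k then f k else 0)"
    by (rule sum.cong) auto
  also have "\<dots> = f j" using j by (simp add: sum.delta sum.delta')
  finally show ?thesis .
qed

lemma one_unitary: "unitary_mat n (1\<^sub>m n)"
  by (simp add: unitary_mat_def)

lemma first_col_unitary:
  assumes n: "n = Suc m" and u: "(\<Sum>i<n. (cmod (u i))\<^sup>2) = 1"
    and u0: "Im (u 0) = 0" "Re (u 0) \<ge> 0"
  shows "\<exists>H. unitary_mat n H \<and> (\<forall>i<n. H $$ (i,0) = u i)"
proof -
  define r where "r = Re (u 0)"
  have ur: "u 0 = complex_of_real r" using u0 by (simp add: r_def complex_eq_iff)
  have us: "r\<^sup>2 + (\<Sum>k<m. (cmod (u (Suc k)))\<^sup>2) = 1"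
    using u unfolding n sum_Suc_split by (simp add: ur)
  have rest_nn: "(\<Sum>k<m. (cmod (u (Suc k)))\<^sup>2) \<ge> 0" by (rule sum_nonneg) simp
  show ?thesis
  proof (cases "r = 1")
    case True
    then have "(\<Sum>k<m. (cmod (u (Suc k)))\<^sup>2) = 0" using us by simp
    then have z: "u (Suc k) = 0" if "k < m" for k
    proof -
      assume s0: "(\<Sum>k<m. (cmod (u (Suc k)))\<^sup>2) = 0"
      have "(cmod (u (Suc k)))\<^sup>2 = 0"
        by (rule sum_nonneg_0[OF finite_lessThan _ s0]) (use that in simp_all)
      then show ?thesis by simp
    qed
    have "\<forall>i<n. (1\<^sub>m n) $$ (i,0) = u i"
    proof (intro allI impI)
      fix i assume "i < n"
      then show "(1\<^sub>m n) $$ (i,0) = u i"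
        using True ur z n by (cases i) auto
    qed
    then show ?thesis using one_unitary by blast
  next
    case False
    have "r\<^sup>2 \<le> 1" using us rest_nn by linarith
    then have "r \<le> 1" by (meson abs_le_D1 abs_square_le_1)
    then have r1: "r < 1" using False by simp
    define w where "w i = (if i = 0 then 1 else 0) - u i" for i
    define N2 where "N2 = 2 - 2 * r"
    have N2p: "N2 > 0" using r1 by (simp add: N2_def)
    have cm1: "cmod (1 - complex_of_real r) = \<bar>1 - r\<bar>"
      by (metis norm_of_real of_real_1 of_real_diff)
    have wn: "(\<Sum>k<n. w k * cnj (w k)) = complex_of_real N2"
    proof -
      have "(\<Sum>k<n. w k * cnj (w k)) = complex_of_real (\<Sum>k<n. (cmod (w k))\<^sup>2)"
        by (simp add: mult_cnj_cmod)
      also have "(\<Sum>k<n. (cmod (w k))\<^sup>2) = (1 - r)\<^sup>2 + (\<Sum>k<m. (cmod (u (Suc k)))\<^sup>2)"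
        unfolding n sum_Suc_split by (simp add: w_def ur norm_minus_commute cm1)
      also have "\<dots> = N2" using us by (simp add: N2_def power2_eq_square algebra_simps)
      finally show ?thesis .
    qed
    define c where "c = 2 / N2"
    have cN: "c * N2 = 2" using N2p by (simp add: c_def)
    define H where "H = mat n n (\<lambda>(i,j). (if i = j then 1 else 0) - complex_of_real c * w i * cnj (w j))"
    have Hc: "H \<in> carrier_mat n n" by (simp add: H_def)
    have Hent: "\<And>i j. i < n \<Longrightarrow> j < n \<Longrightarrow> H $$ (i,j) = (if i = j then 1 else 0) - complex_of_real c * w i * cnj (w j)"
      by (simp add: H_def)
    have adjH: "adj H = H"
      by (rule eq_matI) (auto simp: Hent adj_def H_def)
    have HH: "H * H = 1\<^sub>m n"
    proof (rule eq_matI)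
      fix i j assume ij: "i < dim_row (1\<^sub>m n)" "j < dim_col (1\<^sub>m n)"
      then have i: "i < n" and j: "j < n" by auto
      have "(H * H) $$ (i,j) = (\<Sum>k<n. ((if i = k then 1 else 0) - complex_of_real c * w i * cnj (w k))
             * ((if k = j then 1 else 0) - complex_of_real c * w k * cnj (w j)))"
        using i j by (simp add: mult_ent[OF Hc Hc i j] Hent del: index_mult_mat)
      also have "\<dots> = (\<Sum>k<n. (if i = k then 1 else 0) * (if k = j then 1 else 0))
            - (\<Sum>k<n. (if i = k then 1 else 0) * (complex_of_real c * w k * cnj (w j)))
            - (\<Sum>k<n. complex_of_real c * w i * cnj (w k) * (if k = j then 1 else 0))
            + complex_of_real c * complex_of_real c * w i * cnj (w j) * (\<Sum>k<n. w k * cnj (w k))"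
        by (simp add: algebra_simps sum.distrib sum_subtractf sum_distrib_left)
      also have "\<dots> = (if i = j then 1 else 0) - complex_of_real c * w i * cnj (w j)
          - complex_of_real c * w i * cnj (w j) + complex_of_real (c * c * N2) * w i * cnj (w j)"
        using i j by (simp only: wn sum_delta_l sum_delta_r[where f="\<lambda>k. if i = k then 1 else 0"]
          sum_delta_r[where f="\<lambda>k. complex_of_real c * w i * cnj (w k)"]) (simp add: of_real_mult)
      also have "\<dots> = (if i = j then 1 else 0)"
      proof -
        have "c * c * N2 = 2 * c" using cN by (simp add: algebra_simps)
        then have cc: "complex_of_real (c * c * N2) = 2 * complex_of_real c" by (metis of_real_mult of_real_numeral)
        show ?thesis unfolding cc by (simp add: algebra_simps)
      qed
      finally show "(H * H) $$ (i,j) = 1\<^sub>m n $$ (i,j)" using i j by simp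
    qed (auto simp: H_def)
    have "unitary_mat n H" unfolding unitary_mat_def using Hc adjH HH by simp
    moreover have "\<forall>i<n. H $$ (i,0) = u i"
    proof (intro allI impI)
      fix i assume i: "i < n"
      have w0: "cnj (w 0) = complex_of_real (1 - r)" by (simp add: w_def ur)
      have "complex_of_real c * cnj (w 0) = 1"
      proof -
        have "c * (1 - r) = 1" using r1 by (simp add: c_def N2_def field_simps)
        then have "complex_of_real c * complex_of_real (1 - r) = 1" by (metis of_real_mult of_real_1)
        then show ?thesis by (simp only: w0)
      qed
      then have "H $$ (i,0) = (if i = 0 then 1 else 0) - w i"
        using i n by (simp add: Hent mult.commute mult.left_commute)
      then show "H $$ (i,0) = u i" by (simp add: w_def)
    qed
    ultimately show ?thesis by blast
  qed
qed


lemma unit_eig: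
  assumes W: "W \<in> carrier_mat n n" and n: "0 < n"
  shows "\<exists>e u. (\<Sum>i<n. (cmod (u i))\<^sup>2) = 1 \<and> Im (u 0) = 0 \<and> Re (u 0) \<ge> 0 \<and>
     (\<forall>i<n. (\<Sum>j<n. W $$ (i,j) * u j) = e * u i)"
proof -
  have d: "degree (char_poly W) > 0" using degree_monic_char_poly[OF W] n by auto
  then have "\<not> constant (poly (char_poly W))" by (simp add: constant_degree)
  from fundamental_theorem_of_algebra[OF this] obtain k where "poly (char_poly W) k = 0" by blast
  then have "eigenvalue W k" using eigenvalue_root_char_poly[OF W] by simp
  then obtain v where ev: "eigenvector W v k" unfolding eigenvalue_def by auto
  then have v: "v \<in> carrier_vec n" and v0: "v \<noteq> 0\<^sub>v n" and Wv: "W *\<^sub>v v = k \<cdot>\<^sub>v v"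
    using W unfolding eigenvector_def by auto
  have eq: "(\<Sum>j<n. W $$ (i,j) * v $ j) = k * v $ i" if i: "i < n" for i
  proof -
    have "(W *\<^sub>v v) $ i = (k \<cdot>\<^sub>v v) $ i" using Wv by simp
    then show ?thesis using W v i by (simp add: scalar_prod_def atLeast0LessThan)
  qed
  obtain i0 where i0: "i0 < n" "v $ i0 \<noteq> 0"
  proof -
    have "\<exists>i0<n. v $ i0 \<noteq> 0"
    proof (rule ccontr)
      assume "\<not> ?thesis"
      then have "v = 0\<^sub>v n" using v by (intro eq_vecI) auto
      then show False using v0 by simp
    qed
    then show ?thesis using that by blast
  qed
  define S where "S = (\<Sum>i<n. (cmod (v $ i))\<^sup>2)"
  have Sp: "S > 0" unfolding S_def
    by (rule sum_pos2[of "{..<n}" i0]) (use i0 in auto)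
  define N where "N = sqrt S"
  have Np: "N > 0" using Sp by (simp add: N_def)
  have NS: "N\<^sup>2 = S" using Sp by (simp add: N_def)
  define ph where "ph = (if v $ 0 = 0 then 1 else cnj (v $ 0) / complex_of_real (cmod (v $ 0)))"
  have ph1: "cmod ph = 1" by (simp add: ph_def norm_divide)
  define u where "u i = ph * v $ i / complex_of_real N" for i
  have cu: "cmod (u i) = cmod (v $ i) / N" for i using Np by (simp add: u_def norm_divide norm_mult ph1)
  have "(\<Sum>i<n. (cmod (u i))\<^sup>2) = (\<Sum>i<n. (cmod (v $ i))\<^sup>2) / N\<^sup>2"
    by (simp add: cu power_divide sum_divide_distrib)
  also have "\<dots> = 1" using Sp by (simp add: NS S_def)
  finally have un: "(\<Sum>i<n. (cmod (u i))\<^sup>2) = 1" .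
  have u0: "u 0 = complex_of_real (cmod (v $ 0) / N)"
  proof (cases "v $ 0 = 0")
    case True then show ?thesis by (simp add: u_def)
  next
    case False
    have "ph * v $ 0 = complex_of_real (cmod (v $ 0))"
      using False by (simp add: ph_def cnj_mult_cmod power2_eq_square)
    then show ?thesis by (simp add: u_def)
  qed
  have ue: "(\<Sum>j<n. W $$ (i,j) * u j) = k * u i" if i: "i < n" for i
  proof -
    have "(\<Sum>j<n. W $$ (i,j) * u j) = ph / complex_of_real N * (\<Sum>j<n. W $$ (i,j) * v $ j)"
      by (simp add: u_def sum_distrib_left algebra_simps)
    also have "\<dots> = k * u i" using eq[OF i] by (simp add: u_def algebra_simps)
    finally show ?thesis .
  qed
  have "Im (u 0) = 0" "Re (u 0) \<ge> 0" using Np by (simp_all add: u0)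
  then show ?thesis using un ue by blast
qed


definition blk :: "nat \<Rightarrow> complex mat \<Rightarrow> complex mat" where
  "blk m R = mat (Suc m) (Suc m) (\<lambda>(i,j). if i = 0 then (if j = 0 then 1 else 0)
      else if j = 0 then 0 else R $$ (i - 1, j - 1))"

lemma blk_carrier: "blk m R \<in> carrier_mat (Suc m) (Suc m)"
  by (simp add: blk_def)

lemma blk_ent:
  "blk m R $$ (0,0) = 1"
  "j < m \<Longrightarrow> blk m R $$ (0, Suc j) = 0"
  "i < m \<Longrightarrow> blk m R $$ (Suc i, 0) = 0"
  "i < m \<Longrightarrow> j < m \<Longrightarrow> blk m R $$ (Suc i, Suc j) = R $$ (i,j)"
  by (simp_all add: blk_def)

lemma blk_unitary:
  assumes U: "unitary_mat m R"
  shows "unitary_mat (Suc m) (blk m R)"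
proof -
  have R: "R \<in> carrier_mat m m" and r1: "adj R * R = 1\<^sub>m m" and r2: "R * adj R = 1\<^sub>m m"
    using U by (auto simp: unitary_mat_def)
  note B = blk_carrier[of m R]
  have e1: "(adj R * R) $$ (a,b) = (\<Sum>k<m. cnj (R $$ (k,a)) * R $$ (k,b))" if "a < m" "b < m" for a b
    using that R by (simp add: mult_ent[OF adj_carrier2[OF R] R] del: index_mult_mat)
  have e2: "(R * adj R) $$ (a,b) = (\<Sum>k<m. R $$ (a,k) * cnj (R $$ (b,k)))" if "a < m" "b < m" for a b
    using that R by (simp add: mult_ent[OF R adj_carrier2[OF R]] del: index_mult_mat)
  have 1: "adj (blk m R) * blk m R = 1\<^sub>m (Suc m)"
  proof (rule eq_matI)
    fix i j assume "i < dim_row (1\<^sub>m (Suc m))" "j < dim_col (1\<^sub>m (Suc m))"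
    then have i: "i < Suc m" and j: "j < Suc m" by auto
    have "(adj (blk m R) * blk m R) $$ (i,j) = (\<Sum>k<Suc m. cnj (blk m R $$ (k,i)) * blk m R $$ (k,j))"
      using i j B by (simp add: mult_ent[OF adj_carrier2[OF B] B] del: index_mult_mat)
    also have "\<dots> = cnj (blk m R $$ (0,i)) * blk m R $$ (0,j) + (\<Sum>k<m. cnj (blk m R $$ (Suc k,i)) * blk m R $$ (Suc k,j))"
      by (rule sum_Suc_split)
    also have "\<dots> = 1\<^sub>m (Suc m) $$ (i,j)"
    proof (cases i)
      case 0
      then show ?thesis using j by (cases j) (simp_all add: blk_ent)
    next
      case (Suc a)
      then have a: "a < m" using i by simp
      show ?thesis
      proof (cases j)
        case 0 then show ?thesis using Suc a by (simp add: blk_ent)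
      next
        case (Suc b)
        then have b: "b < m" using j by simp
        have "(\<Sum>k<m. cnj (blk m R $$ (Suc k,i)) * blk m R $$ (Suc k,j)) = (adj R * R) $$ (a,b)"
          using a b \<open>i = Suc a\<close> Suc by (simp add: e1 blk_ent)
        then show ?thesis using a b \<open>i = Suc a\<close> Suc r1 by (simp add: blk_ent)
      qed
    qed
    finally show "(adj (blk m R) * blk m R) $$ (i,j) = 1\<^sub>m (Suc m) $$ (i,j)" .
  qed (use B in auto)
  have 2: "blk m R * adj (blk m R) = 1\<^sub>m (Suc m)"
  proof (rule eq_matI)
    fix i j assume "i < dim_row (1\<^sub>m (Suc m))" "j < dim_col (1\<^sub>m (Suc m))"
    then have i: "i < Suc m" and j: "j < Suc m" by auto
    have "(blk m R * adj (blk m R)) $$ (i,j) = (\<Sum>k<Suc m. blk m R $$ (i,k) * cnj (blk m R $$ (j,k)))"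
      using i j B by (simp add: mult_ent[OF B adj_carrier2[OF B]] del: index_mult_mat)
    also have "\<dots> = blk m R $$ (i,0) * cnj (blk m R $$ (j,0)) + (\<Sum>k<m. blk m R $$ (i,Suc k) * cnj (blk m R $$ (j,Suc k)))"
      by (rule sum_Suc_split)
    also have "\<dots> = 1\<^sub>m (Suc m) $$ (i,j)"
    proof (cases i)
      case 0
      then show ?thesis using j by (cases j) (simp_all add: blk_ent)
    next
      case (Suc a)
      then have a: "a < m" using i by simp
      show ?thesis
      proof (cases j)
        case 0 then show ?thesis using Suc a by (simp add: blk_ent)
      next
        case (Suc b)
        then have b: "b < m" using j by simp
        have "(\<Sum>k<m. blk m R $$ (i,Suc k) * cnj (blk m R $$ (j,Suc k))) = (R * adj R) $$ (a,b)"
          using a b \<open>i = Suc a\<close> Suc by (simp add: e2 blk_ent)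
        then show ?thesis using a b \<open>i = Suc a\<close> Suc r2 by (simp add: blk_ent)
      qed
    qed
    finally show "(blk m R * adj (blk m R)) $$ (i,j) = 1\<^sub>m (Suc m) $$ (i,j)" .
  qed (use B in auto)
  show ?thesis unfolding unitary_mat_def using 1 2 B by blast
qed


lemma mult_adj_cancel_left:
  assumes "unitary_mat n H" "X \<in> carrier_mat n k"
  shows "H * (adj H * X) = X" "adj H * (H * X) = X"
proof -
  have Hc: "H \<in> carrier_mat n n" and h1: "adj H * H = 1\<^sub>m n" and h2: "H * adj H = 1\<^sub>m n"
    using assms by (auto simp: unitary_mat_def)
  have aH: "adj H \<in> carrier_mat n n" using adj_carrier2[OF Hc] .
  show "H * (adj H * X) = X"
    using assoc_mult_mat[OF Hc aH assms(2)] h2 assms(2) by simp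
  show "adj H * (H * X) = X"
    using assoc_mult_mat[OF aH Hc assms(2)] h1 assms(2) by simp
qed

lemma unitary_spectral:
  "unitary_mat n W \<Longrightarrow> \<exists>R \<nu>. unitary_mat n R \<and> W = R * diagm n \<nu> * adj R"
proof (induction n arbitrary: W)
  case 0
  then have W: "W \<in> carrier_mat 0 0" by (simp add: unitary_mat_def)
  have "W = 1\<^sub>m 0 * diagm 0 (\<lambda>_. 0) * adj (1\<^sub>m 0)"
    by (rule eq_matI) (use W in auto)
  then show ?case using one_unitary by blast
next
  case (Suc m)
  define n where "n = Suc m"
  have Wu: "unitary_mat n W" using Suc.prems by (simp add: n_def)
  have Wc: "W \<in> carrier_mat n n" using Wu by (simp add: unitary_mat_def)
  obtain e u where un: "(\<Sum>i<n. (cmod (u i))\<^sup>2) = 1" and u0: "Im (u 0) = 0" "Re (u 0) \<ge> 0"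
    and ue: "\<forall>i<n. (\<Sum>j<n. W $$ (i,j) * u j) = e * u i"
    using unit_eig[OF Wc] by (auto simp: n_def)
  obtain H where Hu: "unitary_mat n H" and Hcol: "\<forall>i<n. H $$ (i,0) = u i"
    using first_col_unitary[OF n_def un u0] by blast
  have Hc: "H \<in> carrier_mat n n" and h1: "adj H * H = 1\<^sub>m n" and h2: "H * adj H = 1\<^sub>m n"
    using Hu by (auto simp: unitary_mat_def)
  have aH: "adj H \<in> carrier_mat n n" using adj_carrier2[OF Hc] .
  define A where "A = adj H * (W * H)"
  have WH: "W * H \<in> carrier_mat n n" using Wc Hc by simp
  have Ac: "A \<in> carrier_mat n n" using aH WH by (simp add: A_def)
  have Au: "unitary_mat n A"
  proof -
    have "A = adj H * W * H" using assoc_mult_mat[OF aH Wc Hc] by (simp add: A_def)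
    then show ?thesis using unitary_mult[OF unitary_mult[OF unitary_adj[OF Hu] Wu] Hu] by simp
  qed
  have n0: "0 < n" by (simp add: n_def)
  have WH0: "(W * H) $$ (k,0) = e * H $$ (k,0)" if k: "k < n" for k
    using k ue Hcol n0 by (simp add: mult_ent[OF Wc Hc k n0] del: index_mult_mat)
  have col0: "A $$ (i,0) = (if i = 0 then e else 0)" if i: "i < n" for i
  proof -
    have "A $$ (i,0) = (\<Sum>k<n. cnj (H $$ (k,i)) * (e * H $$ (k,0)))"
      using i n0 Hc by (simp add: A_def mult_ent[OF aH WH i n0] WH0 del: index_mult_mat)
    also have "\<dots> = e * (adj H * H) $$ (i,0)"
      using i n0 Hc by (simp add: mult_ent[OF aH Hc i n0] sum_distrib_left algebra_simps del: index_mult_mat)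
    also have "\<dots> = (if i = 0 then e else 0)" using h1 i n0 by simp
    finally show ?thesis .
  qed
  have e1: "(cmod e)\<^sup>2 = 1"
    using unitary_cols[OF Au n0] col0 unfolding n_def sum_Suc_split by (simp add: n_def)
  have row0: "A $$ (0, Suc k) = 0" if k: "k < m" for k
  proof -
    have "(cmod (A $$ (0,0)))\<^sup>2 + (\<Sum>k<m. (cmod (A $$ (0, Suc k)))\<^sup>2) = 1"
      using unitary_rows[OF Au n0] unfolding n_def sum_Suc_split .
    then have s0: "(\<Sum>k<m. (cmod (A $$ (0, Suc k)))\<^sup>2) = 0" using col0[OF n0] e1 by simp
    have "(cmod (A $$ (0, Suc k)))\<^sup>2 = 0"
      by (rule sum_nonneg_0[OF finite_lessThan _ s0]) (use k in simp_all)
    then show ?thesis by simp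
  qed
  define A3 where "A3 = mat m m (\<lambda>(i,j). A $$ (Suc i, Suc j))"
  have A3c: "A3 \<in> carrier_mat m m" by (simp add: A3_def)
  have A3e: "A3 $$ (i,j) = A $$ (Suc i, Suc j)" if "i < m" "j < m" for i j
    using that by (simp add: A3_def)
  have aA: "adj A \<in> carrier_mat n n" using adj_carrier2[OF Ac] .
  have A3u: "unitary_mat m A3"
  proof -
    have a1: "adj A * A = 1\<^sub>m n" and a2: "A * adj A = 1\<^sub>m n" using Au by (auto simp: unitary_mat_def)
    have 1: "adj A3 * A3 = 1\<^sub>m m"
    proof (rule eq_matI)
      fix i j assume "i < dim_row (1\<^sub>m m)" "j < dim_col (1\<^sub>m m)"
      then have i: "i < m" and j: "j < m" by auto
      have si: "Suc i < n" and sj: "Suc j < n" using i j by (auto simp: n_def)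
      have "(adj A3 * A3) $$ (i,j) = (\<Sum>k<m. cnj (A $$ (Suc k, Suc i)) * A $$ (Suc k, Suc j))"
        using i j A3c by (simp add: mult_ent[OF adj_carrier2[OF A3c] A3c i j] A3e del: index_mult_mat)
      also have "\<dots> = (adj A * A) $$ (Suc i, Suc j)"
        using si sj Ac i j row0 unfolding mult_ent[OF aA Ac si sj] n_def sum_Suc_split
        by (simp add: n_def del: index_mult_mat)
      also have "\<dots> = 1\<^sub>m m $$ (i,j)" using a1 si sj i j by simp
      finally show "(adj A3 * A3) $$ (i,j) = 1\<^sub>m m $$ (i,j)" .
    qed (use A3c in auto)
    have 2: "A3 * adj A3 = 1\<^sub>m m"
    proof (rule eq_matI)
      fix i j assume "i < dim_row (1\<^sub>m m)" "j < dim_col (1\<^sub>m m)"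
      then have i: "i < m" and j: "j < m" by auto
      have si: "Suc i < n" and sj: "Suc j < n" using i j by (auto simp: n_def)
      have "(A3 * adj A3) $$ (i,j) = (\<Sum>k<m. A $$ (Suc i, Suc k) * cnj (A $$ (Suc j, Suc k)))"
        using i j A3c by (simp add: mult_ent[OF A3c adj_carrier2[OF A3c] i j] A3e del: index_mult_mat)
      also have "\<dots> = (A * adj A) $$ (Suc i, Suc j)"
        using si sj Ac i j col0 unfolding mult_ent[OF Ac aA si sj] n_def sum_Suc_split
        by (simp add: n_def del: index_mult_mat)
      also have "\<dots> = 1\<^sub>m m $$ (i,j)" using a2 si sj i j by simp
      finally show "(A3 * adj A3) $$ (i,j) = 1\<^sub>m m $$ (i,j)" .
    qed (use A3c in auto)
    show ?thesis unfolding unitary_mat_def using 1 2 A3c by blast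
  qed
  obtain R3 \<nu>3 where R3u: "unitary_mat m R3" and A3d: "A3 = R3 * diagm m \<nu>3 * adj R3"
    using Suc.IH[OF A3u] by blast
  have R3c: "R3 \<in> carrier_mat m m" using R3u by (simp add: unitary_mat_def)
  define R' where "R' = blk m R3"
  define \<nu> where "\<nu> k = (if k = 0 then e else \<nu>3 (k - 1))" for k
  have R'u: "unitary_mat n R'" using blk_unitary[OF R3u] by (simp add: R'_def n_def)
  have R'c: "R' \<in> carrier_mat n n" using R'u by (simp add: unitary_mat_def)
  have AR: "A = R' * diagm n \<nu> * adj R'"
  proof (rule eq_matI)
    fix i j assume "i < dim_row (R' * diagm n \<nu> * adj R')" "j < dim_col (R' * diagm n \<nu> * adj R')"
    then have i: "i < n" and j: "j < n" using R'c by auto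
    have "(R' * diagm n \<nu> * adj R') $$ (i,j) = (\<Sum>k<n. R' $$ (i,k) * \<nu> k * cnj (R' $$ (j,k)))"
      by (rule sim_ent[OF R'c i j])
    also have "\<dots> = R' $$ (i,0) * e * cnj (R' $$ (j,0)) + (\<Sum>k<m. R' $$ (i,Suc k) * \<nu>3 k * cnj (R' $$ (j,Suc k)))"
      unfolding n_def sum_Suc_split by (simp add: \<nu>_def)
    also have "\<dots> = A $$ (i,j)"
    proof (cases i)
      case 0
      then show ?thesis using j col0[OF n0] row0 by (cases j) (simp_all add: R'_def blk_ent n_def)
    next
      case (Suc a)
      then have a: "a < m" using i by (simp add: n_def)
      show ?thesis
      proof (cases j)
        case 0 then show ?thesis using Suc a col0 i by (simp add: R'_def blk_ent)
      next
        case (Suc b)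
        then have b: "b < m" using j by (simp add: n_def)
        have "(\<Sum>k<m. R' $$ (i,Suc k) * \<nu>3 k * cnj (R' $$ (j,Suc k))) = (R3 * diagm m \<nu>3 * adj R3) $$ (a,b)"
          using a b \<open>i = Suc a\<close> Suc by (simp add: sim_ent[OF R3c a b] R'_def blk_ent)
        also have "\<dots> = A $$ (i,j)" using A3d[symmetric] A3e[OF a b] \<open>i = Suc a\<close> Suc by simp
        finally show ?thesis using a b \<open>i = Suc a\<close> Suc by (simp add: R'_def blk_ent)
      qed
    qed
    finally show "A $$ (i,j) = (R' * diagm n \<nu> * adj R') $$ (i,j)" by simp
  qed (use R'c Ac in auto)
  have "W = H * A * adj H"
  proof -
    have "H * A = W * H" using mult_adj_cancel_left(1)[OF Hu WH] by (simp add: A_def)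
    then have "H * A * adj H = W * H * adj H" by simp
    also have "\<dots> = W" using assoc_mult_mat[OF Wc Hc aH] h2 Wc by simp
    finally show ?thesis by simp
  qed
  also have "\<dots> = (H * R') * diagm n \<nu> * adj (H * R')"
  proof -
    have c1: "diagm n \<nu> * adj R' \<in> carrier_mat n n" by (rule mult_carrier_mat[OF diagm_carrier adj_carrier2[OF R'c]])
    have c2: "R' * (diagm n \<nu> * adj R') \<in> carrier_mat n n" by (rule mult_carrier_mat[OF R'c c1])
    have c3: "adj R' * adj H \<in> carrier_mat n n" by (rule mult_carrier_mat[OF adj_carrier2[OF R'c] aH])
    have c4: "diagm n \<nu> * (adj R' * adj H) \<in> carrier_mat n n" by (rule mult_carrier_mat[OF diagm_carrier c3])
    have c5: "H * R' \<in> carrier_mat n n" by (rule mult_carrier_mat[OF Hc R'c])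
    have "H * A * adj H = H * (R' * (diagm n \<nu> * (adj R' * adj H)))"
      unfolding AR using Hc R'c adj_carrier2[OF R'c] aH c1 c2 c3 c4
      by (simp add: assoc_mult_mat[of _ n n _ n _ n])
    also have "\<dots> = (H * R') * diagm n \<nu> * adj (H * R')"
      unfolding adj_mult[OF Hc R'c] using Hc R'c adj_carrier2[OF R'c] aH c1 c2 c3 c4 c5
      by (simp add: assoc_mult_mat[of _ n n _ n _ n])
    finally show ?thesis .
  qed
  finally have "W = (H * R') * diagm n \<nu> * adj (H * R')" .
  moreover have "unitary_mat n (H * R')" using unitary_mult[OF Hu R'u] .
  ultimately show ?case by (auto simp: n_def)
qed


lemma sim_carrier: "R \<in> carrier_mat n n \<Longrightarrow> R * diagm n \<nu> * adj R \<in> carrier_mat n n"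
  by (rule mult_carrier_mat[OF mult_carrier_mat[OF _ diagm_carrier] adj_carrier2])

lemma prod_list_upt_lessThan: "prod_list (map f [0..<n]) = (\<Prod>i<n. f i)"
  by (induction n) (auto simp: mult.commute)

lemma char_poly_sim_diag:
  assumes U: "unitary_mat n R"
  shows "char_poly (R * diagm n \<nu> * adj R) = (\<Prod>i<n. [:- \<nu> i, 1:])"
proof -
  have R: "R \<in> carrier_mat n n" and r1: "adj R * R = 1\<^sub>m n" and r2: "R * adj R = 1\<^sub>m n"
    using U by (auto simp: unitary_mat_def)
  have aR: "adj R \<in> carrier_mat n n" using adj_carrier2[OF R] .
  have Mc: "R * diagm n \<nu> * adj R \<in> carrier_mat n n" by (rule sim_carrier[OF R])
  have "similar_mat_wit (R * diagm n \<nu> * adj R) (diagm n \<nu>) R (adj R)"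
    unfolding similar_mat_wit_def Let_def using Mc R aR r1 r2 by auto
  then have "similar_mat (R * diagm n \<nu> * adj R) (diagm n \<nu>)" unfolding similar_mat_def by blast
  then have "char_poly (R * diagm n \<nu> * adj R) = char_poly (diagm n \<nu>)" by (rule char_poly_similar)
  also have "\<dots> = (\<Prod>a\<leftarrow>diag_mat (diagm n \<nu>). [:- a, 1:])"
    by (rule char_poly_upper_triangular[OF diagm_carrier]) (simp add: upper_triangular_def diagm_def)
  also have "diag_mat (diagm n \<nu>) = map \<nu> [0..<n]"
    by (simp add: diag_mat_def diagm_def)
  also have "(\<Prod>a\<leftarrow>map \<nu> [0..<n]. [:- a, 1:]) = (\<Prod>i<n. [:- \<nu> i, 1:])"
    by (simp add: prod_list_upt_lessThan[of "\<lambda>i. [:- \<nu> i, 1:]", symmetric] o_def)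
  finally show ?thesis .
qed

lemma order_lin: "order c [:- a, 1:] = (if a = c then 1 else (0::nat))"
proof (cases "a = c")
  case True
  then show ?thesis using order_power_n_n[of c 1] by simp
next
  case False
  have "poly [:- a, 1:] c \<noteq> 0" using False by simp
  then show ?thesis using False order_0I by metis
qed

lemma order_prod_lin:
  fixes a :: "'x \<Rightarrow> complex"
  assumes "finite S"
  shows "order c (\<Prod>i\<in>S. [:- a i, 1:]) = count (image_mset a (mset_set S)) c"
  using assms
proof (induction S rule: finite_induct)
  case empty
  then show ?case by (simp add: order_0I)
next
  case (insert x F)
  have nz: "(\<Prod>i\<in>F. [:- a i, 1:]) \<noteq> 0" using insert(1) by (simp add: prod_zero_iff)
  have "order c (\<Prod>i\<in>insert x F. [:- a i, 1:]) = order c ([:- a x, 1:] * (\<Prod>i\<in>F. [:- a i, 1:]))"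
    using insert by simp
  also have "\<dots> = order c [:- a x, 1:] + order c (\<Prod>i\<in>F. [:- a i, 1:])"
    by (rule order_mult, rule no_zero_divisors) (use nz in simp_all)
  finally show ?case using insert by (simp add: order_lin)
qed

lemma prod_lin_eq_perm:
  fixes a b :: "nat \<Rightarrow> complex"
  assumes "(\<Prod>i<n. [:- a i, 1:]) = (\<Prod>i<n. [:- b i, 1:])"
  shows "\<exists>\<tau>. \<tau> permutes {..<n} \<and> (\<forall>i<n. a i = b (\<tau> i))"
proof -
  have "image_mset a (mset_set {..<n}) = image_mset b (mset_set {..<n})"
  proof (rule multiset_eqI)
    fix c
    show "count (image_mset a (mset_set {..<n})) c = count (image_mset b (mset_set {..<n})) c"
      using order_prod_lin[of "{..<n}" c a] order_prod_lin[of "{..<n}" c b] assms by simp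
  qed
  then obtain \<tau> where "\<tau> permutes {..<n}" "\<forall>x\<in>{..<n}. a x = b (\<tau> x)"
    by (rule image_mset_eq_implies_permutes[rotated]) auto
  then show ?thesis by auto
qed


lemma swap4:
  "(\<Sum>k<n. \<Sum>l<n. \<Sum>a<n. \<Sum>a'<n. F a a' k l) = (\<Sum>a<(n::nat). \<Sum>a'<n. \<Sum>k<n. \<Sum>l<n. (F a a' k l :: complex))"
proof -
  have "(\<Sum>k<n. \<Sum>l<n. \<Sum>a<n. \<Sum>a'<n. F a a' k l) = (\<Sum>k<n. \<Sum>a<n. \<Sum>l<n. \<Sum>a'<n. F a a' k l)"
    by (rule sum.cong[OF refl], rule sum.swap)
  also have "\<dots> = (\<Sum>k<n. \<Sum>a<n. \<Sum>a'<n. \<Sum>l<n. F a a' k l)"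
    by (rule sum.cong[OF refl], rule sum.cong[OF refl], rule sum.swap)
  also have "\<dots> = (\<Sum>a<n. \<Sum>k<n. \<Sum>a'<n. \<Sum>l<n. F a a' k l)"
    by (rule sum.swap)
  also have "\<dots> = (\<Sum>a<n. \<Sum>a'<n. \<Sum>k<n. \<Sum>l<n. F a a' k l)"
    by (rule sum.cong[OF refl], rule sum.swap)
  finally show ?thesis .
qed

lemma trace_form:
  assumes Q: "Q \<in> carrier_mat n n" and R: "R \<in> carrier_mat n n"
  shows "(\<Sum>a<n. \<Sum>a'<n. (R * diagm n \<nu> * adj R) $$ (a,a') * (Q * diagm n (\<lambda>i. complex_of_real (p i)) * adj Q) $$ (a',a))
    = (\<Sum>k<n. \<nu> k * (\<Sum>l<n. complex_of_real (p l * (cmod ((adj Q * R) $$ (l,k)))\<^sup>2)))"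
proof -
  define F where "F a a' k l = R $$ (a,k) * \<nu> k * cnj (R $$ (a',k)) * (Q $$ (a',l) * complex_of_real (p l) * cnj (Q $$ (a,l)))" for a a' k l
  have L: "(\<Sum>a<n. \<Sum>a'<n. (R * diagm n \<nu> * adj R) $$ (a,a') * (Q * diagm n (\<lambda>i. complex_of_real (p i)) * adj Q) $$ (a',a))
     = (\<Sum>a<n. \<Sum>a'<n. \<Sum>k<n. \<Sum>l<n. F a a' k l)"
    by (rule sum.cong[OF refl], rule sum.cong[OF refl]) (simp add: sim_ent[OF R] sim_ent[OF Q] sum_product F_def)
  have kl: "\<nu> k * complex_of_real (p l * (cmod ((adj Q * R) $$ (l,k)))\<^sup>2) = (\<Sum>a<n. \<Sum>a'<n. F a a' k l)"
    if k: "k < n" and l: "l < n" for k l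
  proof -
    have z: "(adj Q * R) $$ (l,k) = (\<Sum>a<n. cnj (Q $$ (a,l)) * R $$ (a,k))"
      using Q R k l by (simp add: mult_ent[OF adj_carrier2[OF Q] R l k] del: index_mult_mat)
    have "complex_of_real (p l * (cmod ((adj Q * R) $$ (l,k)))\<^sup>2)
       = complex_of_real (p l) * ((adj Q * R) $$ (l,k) * cnj ((adj Q * R) $$ (l,k)))"
      by (simp add: mult_cnj_cmod)
    also have "\<dots> = complex_of_real (p l) * ((\<Sum>a<n. cnj (Q $$ (a,l)) * R $$ (a,k)) * (\<Sum>a'<n. Q $$ (a',l) * cnj (R $$ (a',k))))"
      by (simp add: z cnj_sum)
    finally show ?thesis
      by (simp add: sum_product sum_distrib_left F_def algebra_simps)
  qed
  have "(\<Sum>k<n. \<nu> k * (\<Sum>l<n. complex_of_real (p l * (cmod ((adj Q * R) $$ (l,k)))\<^sup>2)))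
     = (\<Sum>k<n. \<Sum>l<n. \<Sum>a<n. \<Sum>a'<n. F a a' k l)"
    apply (rule sum.cong[OF refl])
    apply (subst sum_distrib_left)
    apply (rule sum.cong[OF refl])
    apply (rule kl)
     apply auto
    done
  also have "\<dots> = (\<Sum>a<n. \<Sum>a'<n. \<Sum>k<n. \<Sum>l<n. F a a' k l)" by (rule swap4)
  finally show ?thesis using L by simp
qed


lemma diag_mult: "diagm n f * diagm n g = diagm n (\<lambda>i. f i * g i)"
proof (rule eq_matI)
  fix i j assume "i < dim_row (diagm n (\<lambda>i. f i * g i))" "j < dim_col (diagm n (\<lambda>i. f i * g i))"
  then have i: "i < n" and j: "j < n" by (auto simp: diagm_def)
  have "(diagm n f * diagm n g) $$ (i,j) = (\<Sum>k<n. (if i = k then f i else 0) * (if k = j then g k else 0))"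
    using i j by (simp add: mult_ent[OF diagm_carrier diagm_carrier i j] del: index_mult_mat)
  also have "\<dots> = (\<Sum>k<n. (if i = k then 1 else 0) * ((if k = j then f i * g k else 0)))"
    by (rule sum.cong) auto
  also have "\<dots> = (if i = j then f i * g i else 0)" using i by (simp only: sum_delta_l; auto)
  finally show "(diagm n f * diagm n g) $$ (i,j) = diagm n (\<lambda>i. f i * g i) $$ (i,j)" using i j by simp
qed (auto simp: diagm_def)

lemma diag_unitary:
  assumes "\<forall>i<n. cmod (f i) = 1"
  shows "unitary_mat n (diagm n f)"
proof -
  have a: "adj (diagm n f) = diagm n (\<lambda>i. cnj (f i))"
    by (rule eq_matI) (auto simp: diagm_def adj_def)
  have 1: "\<And>i. i < n \<Longrightarrow> cnj (f i) * f i = 1" "\<And>i. i < n \<Longrightarrow> f i * cnj (f i) = 1"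
    using assms by (simp_all add: cnj_mult_cmod mult_cnj_cmod)
  have e1: "diagm n (\<lambda>i. cnj (f i) * f i) = 1\<^sub>m n"
    by (rule eq_matI) (auto simp: diagm_def 1)
  have e2: "diagm n (\<lambda>i. f i * cnj (f i)) = 1\<^sub>m n"
    by (rule eq_matI) (auto simp: diagm_def 1)
  show ?thesis unfolding unitary_mat_def a diag_mult e1 e2 by simp
qed

lemma perm_mat_carrier: "perm_mat n s \<in> carrier_mat n n"
  by (simp add: perm_mat_def)

lemma cnj_if01: "cnj (if P then 1 else 0) = (if P then 1 else 0)"
  by simp

lemma perm_mat_dims[simp]: "dim_row (perm_mat n s) = n" "dim_col (perm_mat n s) = n"
  by (simp_all add: perm_mat_def)

lemma perm_mat_ent: "i < n \<Longrightarrow> j < n \<Longrightarrow> perm_mat n s $$ (i,j) = (if i = s j then 1 else 0)"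
  by (simp add: perm_mat_def)

lemma perm_unitary:
  assumes s: "s permutes {..<n}"
  shows "unitary_mat n (perm_mat n s)"
proof -
  note P = perm_mat_carrier[of n s]
  have sl: "s k < n" if "k < n" for k using permutes_in_image[OF s] that by simp
  have inj: "s i = s j \<longleftrightarrow> i = j" for i j using permutes_inj[OF s] by (auto dest: injD)
  have 1: "adj (perm_mat n s) * perm_mat n s = 1\<^sub>m n"
  proof (rule eq_matI)
    fix i j assume "i < dim_row (1\<^sub>m n)" "j < dim_col (1\<^sub>m n)"
    then have i: "i < n" and j: "j < n" by auto
    have "(adj (perm_mat n s) * perm_mat n s) $$ (i,j) = (\<Sum>k<n. (if s i = k then 1 else 0) * (if k = s j then 1 else 0))"
      unfolding mult_ent[OF adj_carrier2[OF P] P i j] using i j by (auto simp: perm_mat_ent intro!: sum.cong)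
    also have "\<dots> = (if s i = s j then 1 else 0)" using sl[OF i] by (rule sum_delta_l)
    also have "\<dots> = 1\<^sub>m n $$ (i,j)" using i j inj by simp
    finally show "(adj (perm_mat n s) * perm_mat n s) $$ (i,j) = 1\<^sub>m n $$ (i,j)" .
  qed (auto simp: perm_mat_def)
  have 2: "perm_mat n s * adj (perm_mat n s) = 1\<^sub>m n"
  proof (rule eq_matI)
    fix i j assume "i < dim_row (1\<^sub>m n)" "j < dim_col (1\<^sub>m n)"
    then have i: "i < n" and j: "j < n" by auto
    have "(perm_mat n s * adj (perm_mat n s)) $$ (i,j) = (\<Sum>k<n. (if i = s k then 1 else 0) * (if j = s k then 1 else 0))"
      unfolding mult_ent[OF P adj_carrier2[OF P] i j] using i j by (auto simp: perm_mat_ent intro!: sum.cong)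
    also have "\<dots> = (\<Sum>k<n. ((\<lambda>k. (if i = k then 1 else 0) * (if j = k then 1 else 0)) \<circ> s) k)"
      by simp
    also have "\<dots> = (\<Sum>k<n. (if i = k then 1 else 0) * (if j = k then 1 else 0))"
      by (rule sum.permute[OF s, symmetric])
    also have "\<dots> = (if j = i then 1 else 0)" using i by (rule sum_delta_l)
    also have "\<dots> = 1\<^sub>m n $$ (i,j)" using i j by simp
    finally show "(perm_mat n s * adj (perm_mat n s)) $$ (i,j) = 1\<^sub>m n $$ (i,j)" .
  qed (auto simp: perm_mat_def)
  show ?thesis unfolding unitary_mat_def using 1 2 P by blast
qed

lemma perm_conj_diag:
  assumes s: "s permutes {..<n}"
  shows "perm_mat n s * diagm n f * adj (perm_mat n s) = diagm n (\<lambda>i. f (inv_into UNIV s i))"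
proof (rule eq_matI)
  note P = perm_mat_carrier[of n s]
  fix i j assume "i < dim_row (diagm n (\<lambda>i. f (inv_into UNIV s i)))" "j < dim_col (diagm n (\<lambda>i. f (inv_into UNIV s i)))"
  then have i: "i < n" and j: "j < n" by (auto simp: diagm_def)
  have "(perm_mat n s * diagm n f * adj (perm_mat n s)) $$ (i,j)
      = (\<Sum>k<n. (if i = s k then 1 else 0) * f k * (if j = s k then 1 else 0))"
    using i j by (simp add: sim_ent[OF P i j] perm_mat_ent cnj_if01)
  also have "\<dots> = (\<Sum>k<n. ((\<lambda>k. (if i = s k then 1 else 0) * f k * (if j = s k then 1 else 0)) \<circ> inv_into UNIV s) k)"
    by (rule sum.permute[OF permutes_inv[OF s]])
  also have "\<dots> = (\<Sum>k<n. (if i = k then 1 else 0) * (f (inv_into UNIV s k) * (if j = k then 1 else 0)))"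
    by (rule sum.cong) (auto simp: permutes_inverses(1)[OF s])
  also have "\<dots> = (if i = j then f (inv_into UNIV s i) else 0)" using i by (simp only: sum_delta_l; auto)
  finally show "(perm_mat n s * diagm n f * adj (perm_mat n s)) $$ (i,j) = diagm n (\<lambda>i. f (inv_into UNIV s i)) $$ (i,j)"
    using i j by simp
qed (auto simp: diagm_def perm_mat_def)

lemma conj_mult:
  assumes Q: "unitary_mat n Q"
  shows "(Q * diagm n f * adj Q) * (Q * diagm n g * adj Q) = Q * (diagm n f * diagm n g) * adj Q"
proof -
  have Qc: "Q \<in> carrier_mat n n" and q1: "adj Q * Q = 1\<^sub>m n" using Q by (auto simp: unitary_mat_def)
  have aQ: "adj Q \<in> carrier_mat n n" using adj_carrier2[OF Qc] .
  have c1: "diagm n g * adj Q \<in> carrier_mat n n" by (rule mult_carrier_mat[OF diagm_carrier aQ])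
  have c2: "Q * (diagm n g * adj Q) \<in> carrier_mat n n" by (rule mult_carrier_mat[OF Qc c1])
  have c3: "adj Q * (Q * (diagm n g * adj Q)) = diagm n g * adj Q"
    using mult_adj_cancel_left(2)[OF Q c1] .
  have c4: "diagm n f * (diagm n g * adj Q) \<in> carrier_mat n n" by (rule mult_carrier_mat[OF diagm_carrier c1])
  have "(Q * diagm n f * adj Q) * (Q * diagm n g * adj Q) = Q * (diagm n f * (adj Q * (Q * (diagm n g * adj Q))))"
  proof -
    have c5: "diagm n f * adj Q \<in> carrier_mat n n" by (rule mult_carrier_mat[OF diagm_carrier aQ])
    have c6: "Q * (diagm n f * adj Q) \<in> carrier_mat n n" by (rule mult_carrier_mat[OF Qc c5])
    have c7: "adj Q * (Q * (diagm n g * adj Q)) \<in> carrier_mat n n" by (rule mult_carrier_mat[OF aQ c2])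
    show ?thesis using Qc aQ c1 c2 c5 c6 c7 by (simp add: assoc_mult_mat[of _ n n _ n _ n])
  qed
  also have "\<dots> = Q * (diagm n f * (diagm n g * adj Q))" by (simp only: c3)
  also have "\<dots> = Q * (diagm n f * diagm n g) * adj Q"
  proof -
    have c8: "diagm n f * diagm n g \<in> carrier_mat n n" by (rule mult_carrier_mat[OF diagm_carrier diagm_carrier])
    have c9: "Q * (diagm n f * diagm n g) \<in> carrier_mat n n" by (rule mult_carrier_mat[OF Qc c8])
    have "Q * (diagm n f * diagm n g) * adj Q = Q * ((diagm n f * diagm n g) * adj Q)"
      by (rule assoc_mult_mat[OF Qc c8 aQ])
    also have "(diagm n f * diagm n g) * adj Q = diagm n f * (diagm n g * adj Q)"
      by (rule assoc_mult_mat[OF diagm_carrier diagm_carrier aQ])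
    finally show ?thesis by simp
  qed
  finally show ?thesis .
qed


lemma expval_form: "expval d dB psi W = (\<Sum>a<d. \<Sum>a'<d. W $$ (a,a') * red_state d dB psi $$ (a',a))"
  unfolding expval_def
  by (auto simp: red_state_def sum_distrib_left algebra_simps intro!: sum.cong)

lemma tr_form:
  assumes A: "A \<in> carrier_mat d d" and B: "B \<in> carrier_mat d d"
  shows "tr (A * B) = (\<Sum>a<d. \<Sum>a'<d. A $$ (a,a') * B $$ (a',a))"
proof -
  have "dim_row (A * B) = d" using A by simp
  then show ?thesis
    unfolding tr_def using A B by (auto simp: mult_ent[OF A B] simp del: index_mult_mat intro!: sum.cong)
qed

lemma bound_sim:
  fixes p :: "nat \<Rightarrow> real"
  assumes Q: "unitary_mat d Q" and R: "unitary_mat d R" and tau: "\<tau> permutes {..<d}"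
    and nu: "\<forall>i<d. \<nu> i = lam (\<tau> i)"
  shows "\<exists>\<sigma>. \<sigma> permutes {..<d} \<and>
    cmod (\<Sum>a<d. \<Sum>a'<d. (R * diagm d \<nu> * adj R) $$ (a,a') * (Q * diagm d (\<lambda>i. complex_of_real (p i)) * adj Q) $$ (a',a))
     \<le> cmod (\<Sum>i<d. lam i * complex_of_real (p (\<sigma> i)))"
proof -
  have Qc: "Q \<in> carrier_mat d d" and Rc: "R \<in> carrier_mat d d" using Q R by (auto simp: unitary_mat_def)
  define Z where "Z = adj Q * R"
  have Zu: "unitary_mat d Z" unfolding Z_def by (rule unitary_mult[OF unitary_adj[OF Q] R])
  define B where "B k l = (cmod (Z $$ (l,k)))\<^sup>2" for k l
  have "(\<Sum>a<d. \<Sum>a'<d. (R * diagm d \<nu> * adj R) $$ (a,a') * (Q * diagm d (\<lambda>i. complex_of_real (p i)) * adj Q) $$ (a',a))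
     = (\<Sum>k<d. \<nu> k * (\<Sum>l<d. complex_of_real (p l * (cmod ((adj Q * R) $$ (l,k)))\<^sup>2)))"
    by (rule trace_form[OF Qc Rc])
  also have "\<dots> = (\<Sum>k<d. lam (\<tau> k) * (\<Sum>l<d. complex_of_real (p l * B k l)))"
    using nu by (auto simp: B_def Z_def intro!: sum.cong)
  finally have eq: "(\<Sum>a<d. \<Sum>a'<d. (R * diagm d \<nu> * adj R) $$ (a,a') * (Q * diagm d (\<lambda>i. complex_of_real (p i)) * adj Q) $$ (a',a))
     = (\<Sum>k<d. lam (\<tau> k) * (\<Sum>l<d. complex_of_real (p l * B k l)))" .
  have nn: "\<forall>i<d. \<forall>j<d. B i j \<ge> 0" by (simp add: B_def)
  have rs: "\<forall>i<d. (\<Sum>j<d. B i j) = 1" using unitary_cols[OF Zu] by (simp add: B_def)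
  have cs: "\<forall>j<d. (\<Sum>i<d. B i j) = 1" using unitary_rows[OF Zu] by (simp add: B_def)
  show ?thesis unfolding eq by (rule bound_E[OF nn rs cs tau])
qed


lemma conj_comp:
  assumes U: "U \<in> carrier_mat n n" and Q: "Q \<in> carrier_mat n n"
  shows "U * (Q * diagm n f * adj Q) * adj U = (U * Q) * diagm n f * adj (U * Q)"
proof -
  have aQ: "adj Q \<in> carrier_mat n n" and aU: "adj U \<in> carrier_mat n n" using adj_carrier2 U Q by blast+
  have c1: "diagm n f * adj Q \<in> carrier_mat n n" by (rule mult_carrier_mat[OF diagm_carrier aQ])
  have c2: "Q * (diagm n f * adj Q) \<in> carrier_mat n n" by (rule mult_carrier_mat[OF Q c1])
  have c3: "adj Q * adj U \<in> carrier_mat n n" by (rule mult_carrier_mat[OF aQ aU])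
  have c4: "diagm n f * (adj Q * adj U) \<in> carrier_mat n n" by (rule mult_carrier_mat[OF diagm_carrier c3])
  have c5: "Q * (diagm n f * (adj Q * adj U)) \<in> carrier_mat n n" by (rule mult_carrier_mat[OF Q c4])
  have c6: "U * Q \<in> carrier_mat n n" by (rule mult_carrier_mat[OF U Q])
  have c7: "U * Q * diagm n f \<in> carrier_mat n n" by (rule mult_carrier_mat[OF c6 diagm_carrier])
  have c8: "Q * diagm n f \<in> carrier_mat n n" by (rule mult_carrier_mat[OF Q diagm_carrier])
  have c9: "U * (Q * (diagm n f * adj Q)) \<in> carrier_mat n n" by (rule mult_carrier_mat[OF U c2])
  have L: "U * (Q * diagm n f * adj Q) * adj U = U * (Q * (diagm n f * (adj Q * adj U)))"
    using U Q aQ aU c1 c2 c3 c4 c5 c8 c9 by (simp add: assoc_mult_mat[of _ n n _ n _ n])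
  have R: "(U * Q) * diagm n f * adj (U * Q) = U * (Q * (diagm n f * (adj Q * adj U)))"
    unfolding adj_mult[OF U Q]
    using U Q aQ aU c1 c2 c3 c4 c5 c6 c7 c8 by (simp add: assoc_mult_mat[of _ n n _ n _ n])
  show ?thesis using L R by simp
qed

lemma unconj:
  assumes Q: "unitary_mat n Q" and P: "P \<in> carrier_mat n n"
  shows "adj Q * (Q * P * adj Q) * Q = P"
proof -
  have Qc: "Q \<in> carrier_mat n n" and q1: "adj Q * Q = 1\<^sub>m n" using Q by (auto simp: unitary_mat_def)
  have aQ: "adj Q \<in> carrier_mat n n" using adj_carrier2[OF Qc] .
  have c1: "P * adj Q \<in> carrier_mat n n" by (rule mult_carrier_mat[OF P aQ])
  have c2: "Q * P \<in> carrier_mat n n" by (rule mult_carrier_mat[OF Qc P])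
  have c3: "Q * P * adj Q \<in> carrier_mat n n" by (rule mult_carrier_mat[OF c2 aQ])
  have "adj Q * (Q * P * adj Q) * Q = adj Q * ((Q * P * adj Q) * Q)" by (rule assoc_mult_mat[OF aQ c3 Qc])
  also have "(Q * P * adj Q) * Q = Q * P * (adj Q * Q)" by (rule assoc_mult_mat[OF c2 aQ Qc])
  also have "\<dots> = Q * P" using q1 right_mult_one_mat[OF c2] by simp
  also have "adj Q * (Q * P) = P" using mult_adj_cancel_left(2)[OF Q P] .
  finally show ?thesis .
qed

theorem lemma1:
  fixes d dB :: nat and psi :: "nat \<Rightarrow> nat \<Rightarrow> complex"
    and lam :: "nat \<Rightarrow> complex" and p :: "nat \<Rightarrow> real" and Q :: "complex mat"
  assumes dle: "d \<le> dB"
    and unit: "(\<Sum>a<d. \<Sum>b<dB. (cmod (psi a b))\<^sup>2) = 1"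
    and lam_unimod: "\<forall>i<d. cmod (lam i) = 1"
    and Q_unitary: "unitary_mat d Q"
    and eig: "red_state d dB psi = Q * diagm d (\<lambda>i. complex_of_real (p i)) * adj Q"
  defines "V \<equiv> Q * diagm d lam * adj Q"
    and "g \<equiv> (\<lambda>U. cmod (\<Sum>i<d. lam i * (\<Sum>j<d. complex_of_real (p j * (cmod ((adj Q * U * Q) $$ (i,j)))\<^sup>2))))"
  shows "is_max {cmod (tr (U * V * adj U * red_state d dB psi)) | U. unitary_mat d U}
                (sqrt (F_Lam d dB lam psi))
       \<and> is_max {g U | U. unitary_mat d U} (sqrt (F_Lam d dB lam psi))
       \<and> (\<exists>\<sigma>. \<sigma> permutes {..<d} \<and> g (Q * perm_mat d \<sigma> * adj Q) = sqrt (F_Lam d dB lam psi))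
       \<and> is_max {cmod (\<Sum>i<d. lam i * complex_of_real (p (\<sigma> i))) | \<sigma>. \<sigma> permutes {..<d}}
                (sqrt (F_Lam d dB lam psi))
       \<and> (\<exists>W \<in> W_set d lam. fid d dB psi W = F_Lam d dB lam psi
             \<and> (\<exists>\<mu>. W = Q * diagm d \<mu> * adj Q)
             \<and> W * red_state d dB psi = red_state d dB psi * W)"
proof -
  define \<rho> where "\<rho> = red_state d dB psi"
  have Qc: "Q \<in> carrier_mat d d" and q1: "adj Q * Q = 1\<^sub>m d" using Q_unitary by (auto simp: unitary_mat_def)
  have aQ: "adj Q \<in> carrier_mat d d" using adj_carrier2[OF Qc] .
  have rhoc: "\<rho> \<in> carrier_mat d d" unfolding \<rho>_def by (simp add: red_state_def)
  have d0: "0 < d"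
  proof (rule ccontr)
    assume "\<not> 0 < d" then have "d = 0" by simp
    then show False using unit by simp
  qed
  define PS where "PS = {cmod (\<Sum>i<d. lam i * complex_of_real (p (s i))) | s. s permutes {..<d}}"
  have PSfin: "finite PS"
  proof -
    have "PS = (\<lambda>s. cmod (\<Sum>i<d. lam i * complex_of_real (p (s i)))) ` {s. s permutes {..<d}}"
      by (auto simp: PS_def)
    then show ?thesis using finite_permutations[of "{..<d}"] by simp
  qed
  have PSne: "PS \<noteq> {}" unfolding PS_def using permutes_id by blast
  define M where "M = Max PS"
  have M_ge: "cmod (\<Sum>i<d. lam i * complex_of_real (p (s i))) \<le> M" if "s permutes {..<d}" for s
    unfolding M_def using PSfin that by (intro Max_ge) (auto simp: PS_def)
  obtain s0 where s0: "s0 permutes {..<d}" and s0M: "cmod (\<Sum>i<d. lam i * complex_of_real (p (s0 i))) = M"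
  proof -
    have "M \<in> PS" unfolding M_def using PSfin PSne by (rule Max_in)
    then show ?thesis using that unfolding PS_def by blast
  qed
  have M0: "M \<ge> 0" using s0M by (metis norm_ge_zero)
  define S where "S W = (\<Sum>a<d. \<Sum>a'<d. W $$ (a,a') * \<rho> $$ (a',a))" for W
  have UB: "cmod (S (R * diagm d \<nu> * adj R)) \<le> M"
    if R: "unitary_mat d R" and tau: "\<tau> permutes {..<d}" and nu: "\<forall>i<d. \<nu> i = lam (\<tau> i)" for R \<tau> \<nu>
  proof -
    obtain s where "s permutes {..<d}"
      and le: "cmod (S (R * diagm d \<nu> * adj R)) \<le> cmod (\<Sum>i<d. lam i * complex_of_real (p (s i)))"
      using bound_sim[OF Q_unitary R tau nu, of p] unfolding S_def \<rho>_def eig by blast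
    then show ?thesis using M_ge[of s] by linarith
  qed
  have fidS: "fid d dB psi W = (cmod (S W))\<^sup>2" for W
    by (simp add: fid_def expval_form S_def \<rho>_def)
  have WUB: "fid d dB psi W \<le> M\<^sup>2" if W: "W \<in> W_set d lam" for W
  proof -
    have Wu: "unitary_mat d W" and cpW: "char_poly W = (\<Prod>i<d. [:- lam i, 1:])"
      using W by (auto simp: W_set_def)
    obtain R \<nu> where R: "unitary_mat d R" and WR: "W = R * diagm d \<nu> * adj R"
      using unitary_spectral[OF Wu] by blast
    have "(\<Prod>i<d. [:- \<nu> i, 1:]) = (\<Prod>i<d. [:- lam i, 1:])"
      using char_poly_sim_diag[OF R, of \<nu>] cpW WR by simp
    then obtain \<tau> where tau: "\<tau> permutes {..<d}" and nu: "\<forall>i<d. \<nu> i = lam (\<tau> i)"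
      using prod_lin_eq_perm by blast
    have "cmod (S W) \<le> M" unfolding WR by (rule UB[OF R tau nu])
    then show ?thesis unfolding fidS by (intro power_mono) auto
  qed
  define P0 where "P0 = perm_mat d s0"
  have P0u: "unitary_mat d P0" unfolding P0_def by (rule perm_unitary[OF s0])
  have P0c: "P0 \<in> carrier_mat d d" unfolding P0_def by (rule perm_mat_carrier)
  define R0 where "R0 = Q * P0"
  have R0u: "unitary_mat d R0" unfolding R0_def by (rule unitary_mult[OF Q_unitary P0u])
  define W0 where "W0 = R0 * diagm d lam * adj R0"
  have W0set: "W0 \<in> W_set d lam"
  proof -
    have "unitary_mat d W0" unfolding W0_def
      by (rule unitary_mult[OF unitary_mult[OF R0u diag_unitary[OF lam_unimod]] unitary_adj[OF R0u]])
    moreover have "char_poly W0 = (\<Prod>i<d. [:- lam i, 1:])" unfolding W0_def by (rule char_poly_sim_diag[OF R0u])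
    ultimately show ?thesis by (simp add: W_set_def)
  qed
  have SW0: "S W0 = (\<Sum>k<d. lam k * complex_of_real (p (s0 k)))"
  proof -
    have R0c: "R0 \<in> carrier_mat d d" using R0u by (simp add: unitary_mat_def)
    have aQR0: "adj Q * R0 = P0" unfolding R0_def by (rule mult_adj_cancel_left(2)[OF Q_unitary P0c])
    have "S W0 = (\<Sum>k<d. lam k * (\<Sum>l<d. complex_of_real (p l * (cmod ((adj Q * R0) $$ (l,k)))\<^sup>2)))"
      unfolding S_def W0_def \<rho>_def eig by (rule trace_form[OF Qc R0c])
    also have "\<dots> = (\<Sum>k<d. lam k * complex_of_real (p (s0 k)))"
    proof (rule sum.cong[OF refl])
      fix k assume k: "k \<in> {..<d}"
      have sk: "s0 k < d" using permutes_in_image[OF s0] k by simp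
      have "(\<Sum>l<d. complex_of_real (p l * (cmod ((adj Q * R0) $$ (l,k)))\<^sup>2))
          = (\<Sum>l<d. if l = s0 k then complex_of_real (p l) else 0)"
        using k by (intro sum.cong) (auto simp: aQR0 P0_def perm_mat_ent)
      also have "\<dots> = complex_of_real (p (s0 k))" using sk by (simp add: sum.delta)
      finally show "lam k * (\<Sum>l<d. complex_of_real (p l * (cmod ((adj Q * R0) $$ (l,k)))\<^sup>2))
          = lam k * complex_of_real (p (s0 k))" by simp
    qed
    finally show ?thesis .
  qed
  have cW0: "cmod (S W0) = M" using SW0 s0M by simp
  have fidW0: "fid d dB psi W0 = M\<^sup>2" using cW0 fidS by simp
  have F: "F_Lam d dB lam psi = M\<^sup>2"
    unfolding F_Lam_def
  proof (rule cSup_eq_maximum)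
    show "M\<^sup>2 \<in> fid d dB psi ` W_set d lam" using W0set fidW0[symmetric] by (rule rev_image_eqI)
  qed (use WUB in auto)
  have sF: "sqrt (F_Lam d dB lam psi) = M" using F M0 by simp
  have VQ: "U * V * adj U = (U * Q) * diagm d lam * adj (U * Q)" if U: "U \<in> carrier_mat d d" for U
  proof -
    have "U * V * adj U = U * (Q * diagm d lam * adj Q) * adj U" by (simp add: V_def)
    also have "\<dots> = (U * Q) * diagm d lam * adj (U * Q)" by (rule conj_comp[OF U Qc])
    finally show ?thesis .
  qed
  have part1: "is_max {cmod (tr (U * V * adj U * red_state d dB psi)) | U. unitary_mat d U} M"
  proof -
    have le: "cmod (tr (U * V * adj U * red_state d dB psi)) \<le> M" if U: "unitary_mat d U" for U
    proof -
      have Uc: "U \<in> carrier_mat d d" using U by (simp add: unitary_mat_def)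
      have UQ: "unitary_mat d (U * Q)" by (rule unitary_mult[OF U Q_unitary])
      have c: "U * Q * diagm d lam * adj (U * Q) \<in> carrier_mat d d"
        by (rule sim_carrier) (use UQ in \<open>simp add: unitary_mat_def\<close>)
      have "tr (U * V * adj U * red_state d dB psi) = S (U * Q * diagm d lam * adj (U * Q))"
        unfolding VQ[OF Uc] S_def \<rho>_def by (rule tr_form[OF c rhoc[unfolded \<rho>_def]])
      also have "cmod \<dots> \<le> M" by (rule UB[OF UQ permutes_id]) simp
      finally show ?thesis .
    qed
    define U0 where "U0 = Q * P0 * adj Q"
    have U0u: "unitary_mat d U0" unfolding U0_def
      by (rule unitary_mult[OF unitary_mult[OF Q_unitary P0u] unitary_adj[OF Q_unitary]])
    have U0c: "U0 \<in> carrier_mat d d" using U0u by (simp add: unitary_mat_def)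
    have U0Q: "U0 * Q = R0"
    proof -
      have c2: "Q * P0 \<in> carrier_mat d d" by (rule mult_carrier_mat[OF Qc P0c])
      have "U0 * Q = Q * P0 * (adj Q * Q)" unfolding U0_def by (rule assoc_mult_mat[OF c2 aQ Qc])
      also have "\<dots> = Q * P0" using q1 right_mult_one_mat[OF c2] by simp
      finally show ?thesis by (simp add: R0_def)
    qed
    have W0c: "W0 \<in> carrier_mat d d" using W0set by (simp add: W_set_def unitary_mat_def)
    have "tr (U0 * V * adj U0 * red_state d dB psi) = S W0"
      unfolding VQ[OF U0c] U0Q W0_def[symmetric] S_def \<rho>_def by (rule tr_form[OF W0c rhoc[unfolded \<rho>_def]])
    then have "M \<in> {cmod (tr (U * V * adj U * red_state d dB psi)) | U. unitary_mat d U}"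
      using U0u cW0 by force
    then show ?thesis unfolding is_max_def using le by blast
  qed
  have gle: "g U \<le> M" if U: "unitary_mat d U" for U
  proof -
    define X where "X = adj Q * U * Q"
    have Xu: "unitary_mat d X" unfolding X_def
      by (rule unitary_mult[OF unitary_mult[OF unitary_adj[OF Q_unitary] U] Q_unitary])
    define B where "B i j = (cmod (X $$ (i,j)))\<^sup>2" for i j
    have nn: "\<forall>i<d. \<forall>j<d. B i j \<ge> 0" by (simp add: B_def)
    have rs: "\<forall>i<d. (\<Sum>j<d. B i j) = 1" using unitary_rows[OF Xu] by (simp add: B_def)
    have cs: "\<forall>j<d. (\<Sum>i<d. B i j) = 1" using unitary_cols[OF Xu] by (simp add: B_def)
    obtain s where s: "s permutes {..<d}"
      and le: "cmod (\<Sum>i<d. lam (id i) * (\<Sum>j<d. complex_of_real (p j * B i j)))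
           \<le> cmod (\<Sum>i<d. lam i * complex_of_real (p (s i)))"
      using bound_E[OF nn rs cs permutes_id, of lam p] by blast
    have "g U = cmod (\<Sum>i<d. lam (id i) * (\<Sum>j<d. complex_of_real (p j * B i j)))"
      by (simp add: g_def B_def X_def)
    then show ?thesis using le M_ge[OF s] by linarith
  qed
  define s1 where "s1 = inv_into UNIV s0"
  have s1p: "s1 permutes {..<d}" unfolding s1_def by (rule permutes_inv[OF s0])
  have gU1: "g (Q * perm_mat d s1 * adj Q) = M"
  proof -
    have X: "adj Q * (Q * perm_mat d s1 * adj Q) * Q = perm_mat d s1"
      by (rule unconj[OF Q_unitary perm_mat_carrier])
    have "(\<Sum>i<d. lam i * (\<Sum>j<d. complex_of_real (p j * (cmod (perm_mat d s1 $$ (i,j)))\<^sup>2)))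
        = (\<Sum>i<d. lam i * complex_of_real (p (s0 i)))"
    proof (rule sum.cong[OF refl])
      fix i assume i: "i \<in> {..<d}"
      have si: "s0 i < d" using permutes_in_image[OF s0] i by simp
      have iff: "i = s1 j \<longleftrightarrow> j = s0 i" for j
        unfolding s1_def using permutes_inverses[OF s0] by metis
      have "(\<Sum>j<d. complex_of_real (p j * (cmod (perm_mat d s1 $$ (i,j)))\<^sup>2))
          = (\<Sum>j<d. if j = s0 i then complex_of_real (p j) else 0)"
        using i by (intro sum.cong) (auto simp: perm_mat_ent iff)
      also have "\<dots> = complex_of_real (p (s0 i))" using si by (simp add: sum.delta)
      finally show "lam i * (\<Sum>j<d. complex_of_real (p j * (cmod (perm_mat d s1 $$ (i,j)))\<^sup>2))
          = lam i * complex_of_real (p (s0 i))" by simp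
    qed
    then show ?thesis unfolding g_def X using s0M by simp
  qed
  have part2: "is_max {g U | U. unitary_mat d U} M"
  proof -
    have "unitary_mat d (Q * perm_mat d s1 * adj Q)"
      by (rule unitary_mult[OF unitary_mult[OF Q_unitary perm_unitary[OF s1p]] unitary_adj[OF Q_unitary]])
    then have "M \<in> {g U | U. unitary_mat d U}" using gU1 by force
    then show ?thesis unfolding is_max_def using gle by blast
  qed
  have part4: "is_max {cmod (\<Sum>i<d. lam i * complex_of_real (p (\<sigma> i))) | \<sigma>. \<sigma> permutes {..<d}} M"
    unfolding is_max_def using s0 s0M M_ge by blast
  have part5: "\<exists>W \<in> W_set d lam. fid d dB psi W = F_Lam d dB lam psi
             \<and> (\<exists>\<mu>. W = Q * diagm d \<mu> * adj Q)
             \<and> W * red_state d dB psi = red_state d dB psi * W"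
  proof -
    define mu where "mu i = lam (inv_into UNIV s0 i)" for i
    have W0mu: "W0 = Q * diagm d mu * adj Q"
    proof -
      have "W0 = Q * (P0 * diagm d lam * adj P0) * adj Q"
        unfolding W0_def R0_def by (rule conj_comp[OF Qc P0c, symmetric])
      also have "P0 * diagm d lam * adj P0 = diagm d mu"
        unfolding P0_def mu_def by (rule perm_conj_diag[OF s0])
      finally show ?thesis .
    qed
    have comm: "W0 * red_state d dB psi = red_state d dB psi * W0"
      unfolding W0mu eig conj_mult[OF Q_unitary] diag_mult by (simp add: mult.commute)
    have "fid d dB psi W0 = F_Lam d dB lam psi" using fidW0 F by simp
    moreover have "\<exists>\<mu>. W0 = Q * diagm d \<mu> * adj Q" using W0mu by blast
    ultimately show ?thesis using W0set comm by blast
  qed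
  show ?thesis unfolding sF using part1 part2 part4 part5 s1p gU1 by blast
qed

end
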